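(* Let $\tau\subset\overline{\mathrm{K\ddot ah}(X)}$ be a cone and $\beta=(0,\dots,0,-1/2,\dots,-1/2)$. Then the zero locus of $\mathrm{Ind}(\tau,\beta)$ in $\mathbb{C}^J$ consists of at most one point, namely $\alpha^0=(\alpha^0_{i,j})$ with $\alpha^0_{i,0}=-1/2$ for $1\le i\le r$ and $\alpha^0_{i,j}=0$ for $j\ge1$.
   Context: $N\cong\mathbb{Z}^n$, $M$ dual. $X$ smooth projective toric with fan $\Sigma$ and nef-partition $\Sigma(1)=I_1\sqcup\cdots\sqcup I_r$ (each $E_i=\sum_{\rho\in I_i}D_\rho$ nef), $I_i=\{\rho_{i,1},\dots,\rho_{i,n_i}\}$, $J=\{(i,j):1\le i\le r,0\le j\le n_i\}$, $\nu_{i,j}=(\rho_{i,j},e_i)$ ($j\ge1$), $\nu_{i,0}=(0,e_i)$ in $N\times\mathbb{Z}^r$. $L_{\mathrm{ext}}=\ker(\mathbb{Z}^J\to N\times\mathbb{Z}^r,\ e_{i,j}\mapsto\nu_{i,j})\cong H_2(X,\mathbb{Z})$, so $H^2(X,\mathbb{R})\cong L_{\mathrm{ext}}^\vee\otimes\mathbb{R}$ contains the closed Kähler cone $\overline{\mathrm{K\ddot ah}(X)}$. For $\ell\in L_{\mathrm{ext}}$, $\ell^+$ is its positive part and $I_\ell(\alpha)=\prod_{(i,j)\in J}\prod_{k=0}^{\ell^+_{i,j}-1}(\alpha_{i,j}-k)$. The indicial ideal $\mathrm{Ind}(\tau,\beta)\subset\mathbb{C}[\alpha_{i,j}:(i,j)\in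 J]$ is generated by $I_\ell(\alpha)$ for $0\ne\ell\in\tau^\vee\cap L_{\mathrm{ext}}$ and by $\sum_{(i,j)\in J}\langle\bar m,\nu_{i,j}\rangle\alpha_{i,j}-\langle\bar m,\beta\rangle$ for $\bar m\in M\times\mathbb{Z}^r$. *)

theory Defs
  imports "HOL-Analysis.Analysis"
begin

text \<open>The nef-partition is given by r, the sizes nI i = n_i and the
  ray generators rho (i,j) in N = Z^n (embedded in real^'n), for 1 <= i <= r, 1 <= j <= n_i.
  Index pairs (i,j) with j = 0 are the extra indices of J.\<close>

definition Jset :: "nat \<Rightarrow> (nat \<Rightarrow> nat) \<Rightarrow> (nat \<times> nat) set" where
  "Jset r nI = {(i,j). 1 \<le> i \<and> i \<le> r \<and> j \<le> nI i}"

definition J1 :: "nat \<Rightarrow> (nat \<Rightarrow> nat) \<Rightarrow> (nat \<times> nat) set" where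
  "J1 r nI = {(i,j). 1 \<le> i \<and> i \<le> r \<and> 1 \<le> j \<and> j \<le> nI i}"

definition int_vec :: "real^'n \<Rightarrow> bool" where
  "int_vec v \<longleftrightarrow> (\<forall>t. v $ t \<in> \<int>)"

definition gen_cone :: "('k \<Rightarrow> real^'n) \<Rightarrow> 'k set \<Rightarrow> (real^'n) set" where
  "gen_cone \<rho> S = {(\<Sum>k\<in>S. c k *\<^sub>R \<rho> k) | c. \<forall>k\<in>S. 0 \<le> c k}"

text \<open>A smooth complete fan with ray set {rho k | k in R}, given by its maximal cones
  (each maximal cone sigma in C is given by the set of indices of its rays).\<close>
definition smooth_complete_fan :: "('k \<Rightarrow> real^'n) \<Rightarrow> 'k set \<Rightarrow> 'k set set \<Rightarrow> bool" where
  "smooth_complete_fan \<rho> R C \<longleftrightarrow>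
     finite R \<and> finite C \<and> C \<noteq> {} \<and> inj_on \<rho> R \<and> (\<forall>k\<in>R. int_vec (\<rho> k)) \<and>
     (\<forall>\<sigma>\<in>C. \<sigma> \<subseteq> R \<and> card \<sigma> = CARD('n) \<and>
        (\<forall>v. int_vec v \<longrightarrow> (\<exists>c. (\<forall>k\<in>\<sigma>. c k \<in> \<int>) \<and> v = (\<Sum>k\<in>\<sigma>. c k *\<^sub>R \<rho> k)))) \<and>
     (\<forall>k\<in>R. \<exists>\<sigma>\<in>C. k \<in> \<sigma>) \<and>
     (\<forall>x. \<exists>\<sigma>\<in>C. x \<in> gen_cone \<rho> \<sigma>) \<and>
     (\<forall>\<sigma>\<in>C. \<forall>\<sigma>'\<in>C. gen_cone \<rho> \<sigma> \<inter> gen_cone \<rho> \<sigma>' = gen_cone \<rho> (\<sigma> \<inter> \<sigma>'))"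

text \<open>The R-divisor sum a_k D_k is nef / ample (convex / strictly convex support function).\<close>
definition nef_div :: "('k \<Rightarrow> real^'n) \<Rightarrow> 'k set \<Rightarrow> 'k set set \<Rightarrow> ('k \<Rightarrow> real) \<Rightarrow> bool" where
  "nef_div \<rho> R C a \<longleftrightarrow> (\<forall>\<sigma>\<in>C. \<exists>m::real^'n.
      (\<forall>k\<in>\<sigma>. m \<bullet> \<rho> k = - a k) \<and> (\<forall>k\<in>R. m \<bullet> \<rho> k \<ge> - a k))"

definition ample_div :: "('k \<Rightarrow> real^'n) \<Rightarrow> 'k set \<Rightarrow> 'k set set \<Rightarrow> ('k \<Rightarrow> real) \<Rightarrow> bool" where
  "ample_div \<rho> R C a \<longleftrightarrow> (\<forall>\<sigma>\<in>C. \<exists>m::real^'n.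
      (\<forall>k\<in>\<sigma>. m \<bullet> \<rho> k = - a k) \<and> (\<forall>k\<in>R - \<sigma>. m \<bullet> \<rho> k > - a k))"

definition projective_fan :: "('k \<Rightarrow> real^'n) \<Rightarrow> 'k set \<Rightarrow> 'k set set \<Rightarrow> bool" where
  "projective_fan \<rho> R C \<longleftrightarrow> (\<exists>a. ample_div \<rho> R C a)"

definition nef_partition :: "nat \<Rightarrow> (nat \<Rightarrow> nat) \<Rightarrow> (nat \<times> nat \<Rightarrow> real^'n) \<Rightarrow> (nat \<times> nat) set set \<Rightarrow> bool" where
  "nef_partition r nI \<rho> C \<longleftrightarrow>
     (\<forall>i\<in>{1..r}. nef_div \<rho> (J1 r nI) C (\<lambda>k. if fst k = i then 1 else 0))"

text \<open>H^2(X,R) = L_ext^dual tensor R = R^J / (M x Z^r)_R. A vector w in R^J represents the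
  class of the divisor sum_{(i,j), j>=1} (w(i,j) - w(i,0)) D_{rho_{i,j}}.
  The Kaehler cone (ample classes) as a set of representatives in R^J.\<close>
definition kahler_cone :: "nat \<Rightarrow> (nat \<Rightarrow> nat) \<Rightarrow> (nat \<times> nat \<Rightarrow> real^'n) \<Rightarrow> (nat \<times> nat) set set
    \<Rightarrow> (nat \<times> nat \<Rightarrow> real) set" where
  "kahler_cone r nI \<rho> C = {w. ample_div \<rho> (J1 r nI) C (\<lambda>k. w k - w (fst k, 0))}"

text \<open>L_ext = kernel of Z^J -> N x Z^r, e_{i,j} |-> nu_{i,j}.\<close>
definition Lext :: "nat \<Rightarrow> (nat \<Rightarrow> nat) \<Rightarrow> (nat \<times> nat \<Rightarrow> real^'n) \<Rightarrow> (nat \<times> nat \<Rightarrow> int) set" where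
  "Lext r nI \<rho> = {l. (\<forall>k. k \<notin> Jset r nI \<longrightarrow> l k = 0) \<and>
      (\<Sum>k\<in>J1 r nI. real_of_int (l k) *\<^sub>R \<rho> k) = 0 \<and>
      (\<forall>i\<in>{1..r}. (\<Sum>j\<in>{0..nI i}. l (i,j)) = 0)}"

definition dual_Lext :: "nat \<Rightarrow> (nat \<Rightarrow> nat) \<Rightarrow> (nat \<times> nat \<Rightarrow> real^'n) \<Rightarrow> (nat \<times> nat \<Rightarrow> real) set
    \<Rightarrow> (nat \<times> nat \<Rightarrow> int) set" where
  "dual_Lext r nI \<rho> \<tau> = {l \<in> Lext r nI \<rho>. \<forall>w\<in>\<tau>. (\<Sum>k\<in>Jset r nI. w k * real_of_int (l k)) \<ge> 0}"

definition I_ell :: "nat \<Rightarrow> (nat \<Rightarrow> nat) \<Rightarrow> (nat \<times> nat \<Rightarrow> int) \<Rightarrow> (nat \<times> nat \<Rightarrow> complex) \<Rightarrow> complex" where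
  "I_ell r nI l \<alpha> = (\<Prod>k\<in>Jset r nI. \<Prod>q<nat (l k). (\<alpha> k - of_nat q))"

definition pair_nu :: "(nat \<times> nat \<Rightarrow> real^'n) \<Rightarrow> real^'n \<Rightarrow> (nat \<Rightarrow> int) \<Rightarrow> nat \<times> nat \<Rightarrow> real" where
  "pair_nu \<rho> m kk ij = (if snd ij = 0 then real_of_int (kk (fst ij))
                        else m \<bullet> \<rho> ij + real_of_int (kk (fst ij)))"

text \<open>beta = (b0, b) in (N x Z^r) tensor C; pairing with (m,kk).\<close>
definition pair_beta :: "nat \<Rightarrow> real^'n \<Rightarrow> (nat \<Rightarrow> int) \<Rightarrow> complex^'n \<Rightarrow> (nat \<Rightarrow> complex) \<Rightarrow> complex" where
  "pair_beta r m kk b0 b = (\<Sum>t\<in>UNIV. complex_of_real (m $ t) * b0 $ t) +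
                           (\<Sum>i\<in>{1..r}. of_int (kk i) * b i)"

definition ind_zero_locus :: "nat \<Rightarrow> (nat \<Rightarrow> nat) \<Rightarrow> (nat \<times> nat \<Rightarrow> real^'n) \<Rightarrow> (nat \<times> nat \<Rightarrow> real) set
    \<Rightarrow> complex^'n \<Rightarrow> (nat \<Rightarrow> complex) \<Rightarrow> (nat \<times> nat \<Rightarrow> complex) set" where
  "ind_zero_locus r nI \<rho> \<tau> b0 b = {\<alpha>.
      (\<forall>l\<in>dual_Lext r nI \<rho> \<tau>. l \<noteq> (\<lambda>_. 0) \<longrightarrow> I_ell r nI l \<alpha> = 0) \<and>
      (\<forall>m kk. int_vec m \<longrightarrow>
         (\<Sum>k\<in>Jset r nI. complex_of_real (pair_nu \<rho> m kk k) * \<alpha> k) - pair_beta r m kk b0 b = 0)}"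

text \<open>Convex cone in R^J (functions on index pairs), stated pointwise since the
  function type carries no vector space instance.\<close>
definition fun_convex_cone :: "(nat \<times> nat \<Rightarrow> real) set \<Rightarrow> bool" where
  "fun_convex_cone S \<longleftrightarrow> S \<noteq> {} \<and>
     (\<forall>x\<in>S. \<forall>y\<in>S. (\<lambda>k. x k + y k) \<in> S) \<and> (\<forall>x\<in>S. \<forall>c\<ge>0. (\<lambda>k. c * x k) \<in> S)"

end

theory Submission
  imports Defs
begin

lemma fan_indep:
  fixes \<rho> :: "'k \<Rightarrow> real^'n"
  assumes F: "smooth_complete_fan \<rho> R C" and s: "\<sigma> \<in> C"
    and e: "(\<Sum>k\<in>\<sigma>. e k *\<^sub>R \<rho> k) = 0" and k0: "k0\<in>\<sigma>"
  shows "e k0 = 0"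
proof -
  have sR: "\<sigma> \<subseteq> R" and fR: "finite R" and inj: "inj_on \<rho> R"
    and cs: "card \<sigma> = CARD('n)"
    and gen: "\<And>v. int_vec v \<Longrightarrow> \<exists>c. v = (\<Sum>k\<in>\<sigma>. c k *\<^sub>R \<rho> k)"
    using F s unfolding smooth_complete_fan_def by blast+
  have fs: "finite \<sigma>" using sR fR finite_subset by blast
  have injs: "inj_on \<rho> \<sigma>" using inj sR inj_on_subset by blast
  have sp: "Basis \<subseteq> span (\<rho> ` \<sigma>)"
  proof
    fix b :: "real^'n" assume "b \<in> Basis"
    then obtain i where b: "b = axis i 1" by (auto simp: Basis_vec_def)
    have "int_vec b" unfolding int_vec_def b by (auto simp: axis_def)
    then obtain c where "b = (\<Sum>k\<in>\<sigma>. c k *\<^sub>R \<rho> k)" using gen by blast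
    moreover have "\<And>k. k\<in>\<sigma> \<Longrightarrow> c k *\<^sub>R \<rho> k \<in> span (\<rho> ` \<sigma>)"
      by (simp add: span_base span_scale)
    ultimately show "b \<in> span (\<rho> ` \<sigma>)" by (simp add: span_sum)
  qed
  have "UNIV \<subseteq> span (\<rho> ` \<sigma>)" using sp span_Basis span_mono span_span
    by (metis span_minimal subspace_span)
  moreover have "card (\<rho> ` \<sigma>) = CARD('n)" using card_image[OF injs] cs by simp
  ultimately have ind: "independent (\<rho> ` \<sigma>)"
    using card_le_dim_spanning[of "\<rho> ` \<sigma>" UNIV] fs by simp
  define c where "c v = e (inv_into \<sigma> \<rho> v)" for v
  have "(\<Sum>v\<in>\<rho> ` \<sigma>. c v *\<^sub>R v) = (\<Sum>k\<in>\<sigma>. c (\<rho> k) *\<^sub>R \<rho> k)"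
    by (rule sum.reindex[OF injs, unfolded comp_def])
  also have "\<dots> = 0" using e by (simp add: c_def inv_into_f_f[OF injs])
  finally have "c (\<rho> k0) = 0" using ind k0 unfolding independent_explicit by blast
  then show ?thesis by (simp add: c_def inv_into_f_f[OF injs k0])
qed

lemma J1_Sigma: "J1 r nI = Sigma {1..r} (\<lambda>i. {1..nI i})" by (auto simp: J1_def)
lemma Jset_Sigma: "Jset r nI = Sigma {1..r} (\<lambda>i. {0..nI i})" by (auto simp: Jset_def)
lemma finite_J1: "finite (J1 r nI)" by (simp add: J1_Sigma)
lemma finite_Jset: "finite (Jset r nI)" by (simp add: Jset_Sigma)
lemma sum_J1: "(\<Sum>k\<in>J1 r nI. f k) = (\<Sum>i\<in>{1..r}. \<Sum>j\<in>{1..nI i}. f (i,j))"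
  by (simp add: J1_Sigma sum.Sigma)
lemma sum_Jset: "(\<Sum>k\<in>Jset r nI. f k) = (\<Sum>i\<in>{1..r}. \<Sum>j\<in>{0..nI i}. f (i,j))"
  by (simp add: Jset_Sigma sum.Sigma)
lemma J1_sub: "J1 r nI \<subseteq> Jset r nI" by (auto simp: J1_def Jset_def)
lemma J1_iff: "k \<in> J1 r nI \<longleftrightarrow> k \<in> Jset r nI \<and> snd k \<noteq> 0"
  by (cases k) (auto simp: J1_def Jset_def)

lemma lin_facts:
  fixes \<rho> :: "nat \<times> nat \<Rightarrow> real^'n"
  assumes aZ: "\<alpha> \<in> ind_zero_locus r nI \<rho> \<tau> 0 (\<lambda>i. - 1/2)"
  shows "\<And>t. (\<Sum>k\<in>J1 r nI. complex_of_real (\<rho> k $ t) * \<alpha> k) = 0"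
    and "\<And>i. i \<in> {1..r} \<Longrightarrow> (\<Sum>j\<in>{0..nI i}. \<alpha> (i,j)) = - 1/2"
proof -
  have Lin: "\<And>m kk. int_vec m \<Longrightarrow>
     (\<Sum>k\<in>Jset r nI. complex_of_real (pair_nu \<rho> m kk k) * \<alpha> k) - pair_beta r m kk 0 (\<lambda>i. -1/2) = 0"
    using aZ unfolding ind_zero_locus_def by blast
  fix t
  have iv: "int_vec (axis t (1::real) :: real^'n)" unfolding int_vec_def by (auto simp: axis_def)
  have "(\<Sum>k\<in>Jset r nI. complex_of_real (pair_nu \<rho> (axis t 1) (\<lambda>_. 0) k) * \<alpha> k) = 0"
    using Lin[OF iv, of "\<lambda>_. 0"] by (simp add: pair_beta_def)
  also have "(\<Sum>k\<in>Jset r nI. complex_of_real (pair_nu \<rho> (axis t 1) (\<lambda>_. 0) k) * \<alpha> k)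
      = (\<Sum>k\<in>J1 r nI. complex_of_real (pair_nu \<rho> (axis t 1) (\<lambda>_. 0) k) * \<alpha> k)"
    by (rule sum.mono_neutral_right[OF finite_Jset J1_sub]) (auto simp: J1_iff pair_nu_def)
  also have "\<dots> = (\<Sum>k\<in>J1 r nI. complex_of_real (\<rho> k $ t) * \<alpha> k)"
    by (rule sum.cong) (auto simp: J1_iff pair_nu_def inner_axis')
  finally show "(\<Sum>k\<in>J1 r nI. complex_of_real (\<rho> k $ t) * \<alpha> k) = 0" .
next
  have Lin: "\<And>m kk. int_vec m \<Longrightarrow>
     (\<Sum>k\<in>Jset r nI. complex_of_real (pair_nu \<rho> m kk k) * \<alpha> k) - pair_beta r m kk 0 (\<lambda>i. -1/2) = 0"
    using aZ unfolding ind_zero_locus_def by blast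
  fix i assume i: "i \<in> {1..r}"
  define kk :: "nat \<Rightarrow> int" where "kk i' = (if i' = i then 1 else 0)" for i'
  have iv: "int_vec (0 :: real^'n)" unfolding int_vec_def by auto
  have pb: "pair_beta r 0 kk 0 (\<lambda>i. -1/2) = - 1/2"
  proof -
    have "(\<Sum>i'\<in>{1..r}. of_int (kk i') * (-1/2::complex)) = (\<Sum>i'\<in>{1..r}. if i' = i then -1/2 else 0)"
      by (rule sum.cong) (auto simp: kk_def)
    then show ?thesis using i by (simp add: pair_beta_def)
  qed
  have "(\<Sum>k\<in>Jset r nI. complex_of_real (pair_nu \<rho> 0 kk k) * \<alpha> k)
     = (\<Sum>i'\<in>{1..r}. \<Sum>j\<in>{0..nI i'}. (if i' = i then \<alpha> (i',j) else 0))"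
    unfolding sum_Jset by (intro sum.cong refl) (auto simp: pair_nu_def kk_def)
  also have "\<dots> = (\<Sum>i'\<in>{1..r}. if i' = i then (\<Sum>j\<in>{0..nI i'}. \<alpha> (i',j)) else 0)"
    by (rule sum.cong) auto
  also have "\<dots> = (\<Sum>j\<in>{0..nI i}. \<alpha> (i,j))"
    using i by simp
  finally show "(\<Sum>j\<in>{0..nI i}. \<alpha> (i,j)) = - 1/2"
    using Lin[OF iv, of kk] pb by simp
qed

lemma main_zero:
  fixes \<rho> :: "nat \<times> nat \<Rightarrow> real^'n"
  assumes fan: "smooth_complete_fan \<rho> (J1 r nI) C"
    and nefp: "nef_partition r nI \<rho> C"
    and tau: "\<tau> \<subseteq> closure (kahler_cone r nI \<rho> C)"
    and aZ: "\<alpha> \<in> ind_zero_locus r nI \<rho> \<tau> 0 (\<lambda>i. - 1/2)"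
  shows "\<forall>k\<in>J1 r nI. \<alpha> k = 0"
proof (rule ccontr)
  let ?R = "J1 r nI"
  assume "\<not> (\<forall>k\<in>?R. \<alpha> k = 0)"
  define F where "F = {k\<in>?R. \<alpha> k \<noteq> 0}"
  have FR: "F \<subseteq> ?R" by (auto simp: F_def)
  have fF: "finite F" using FR finite_J1 finite_subset by blast
  have Iz: "\<And>l. l \<in> dual_Lext r nI \<rho> \<tau> \<Longrightarrow> l \<noteq> (\<lambda>_. 0) \<Longrightarrow> I_ell r nI l \<alpha> = 0"
    using aZ unfolding ind_zero_locus_def by blast
  have L1: "\<And>t. (\<Sum>k\<in>?R. complex_of_real (\<rho> k $ t) * \<alpha> k) = 0"
    using lin_facts(1)[OF aZ] by blast
  have intR: "\<And>k. k \<in> ?R \<Longrightarrow> int_vec (\<rho> k)"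
    and cover: "\<And>x. \<exists>\<sigma>\<in>C. x \<in> gen_cone \<rho> \<sigma>"
    and sub: "\<And>\<sigma>. \<sigma> \<in> C \<Longrightarrow> \<sigma> \<subseteq> ?R"
    and gen: "\<And>\<sigma> v. \<sigma> \<in> C \<Longrightarrow> int_vec v \<Longrightarrow> \<exists>c. (\<forall>k\<in>\<sigma>. c k \<in> \<int>) \<and> v = (\<Sum>k\<in>\<sigma>. c k *\<^sub>R \<rho> k)"
    using fan unfolding smooth_complete_fan_def by blast+
  define x where "x = (\<Sum>k\<in>F. \<rho> k)"
  obtain \<sigma> where sC: "\<sigma> \<in> C" and xg: "x \<in> gen_cone \<rho> \<sigma>" using cover by blast
  obtain c where c0: "\<forall>k\<in>\<sigma>. 0 \<le> c k" and xc: "x = (\<Sum>k\<in>\<sigma>. c k *\<^sub>R \<rho> k)"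
    using xg unfolding gen_cone_def by blast
  have sR: "\<sigma> \<subseteq> ?R" using sub sC by blast
  have fs: "finite \<sigma>" using sR finite_J1 finite_subset by blast
  have ivx: "int_vec x" unfolding int_vec_def x_def
  proof
    fix t show "(\<Sum>k\<in>F. \<rho> k) $ t \<in> \<int>"
      using intR FR unfolding int_vec_def by (auto simp: sum_component intro!: Ints_sum)
  qed
  obtain d where dI: "\<forall>k\<in>\<sigma>. d k \<in> \<int>" and xd: "x = (\<Sum>k\<in>\<sigma>. d k *\<^sub>R \<rho> k)"
    using gen[OF sC ivx] by blast
  have cd: "\<And>k. k \<in> \<sigma> \<Longrightarrow> c k = d k"
  proof -
    fix k assume k: "k \<in> \<sigma>"
    have "(\<Sum>k\<in>\<sigma>. (c k - d k) *\<^sub>R \<rho> k) = 0"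
      using xc xd by (simp add: scaleR_diff_left sum_subtractf)
    from fan_indep[OF fan sC this k] show "c k = d k" by simp
  qed
  have cI: "\<And>k. k \<in> \<sigma> \<Longrightarrow> real_of_int \<lfloor>c k\<rfloor> = c k"
    using cd dI by (metis Ints_cases floor_of_int)
  show False
  proof (cases "F \<subseteq> \<sigma>")
    case True
    have RS: "\<And>f :: _ \<Rightarrow> real. (\<forall>k\<in>?R. \<alpha> k = 0 \<longrightarrow> f k = 0) \<Longrightarrow> (\<Sum>k\<in>?R. f k) = (\<Sum>k\<in>\<sigma>. f k)"
      by (rule sum.mono_neutral_right[OF finite_J1 sR]) (use True in \<open>auto simp: F_def\<close>)
    have re: "(\<Sum>k\<in>\<sigma>. Re (\<alpha> k) *\<^sub>R \<rho> k) = 0"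
    proof (rule vec_eq_iff[THEN iffD2, rule_format])
      fix t
      have "(\<Sum>k\<in>\<sigma>. Re (\<alpha> k) * \<rho> k $ t) = (\<Sum>k\<in>?R. Re (\<alpha> k) * \<rho> k $ t)"
        by (rule RS[symmetric]) auto
      also have "\<dots> = Re (\<Sum>k\<in>?R. complex_of_real (\<rho> k $ t) * \<alpha> k)"
        by (simp add: Re_sum mult.commute)
      also have "\<dots> = 0" using L1 by simp
      finally show "(\<Sum>k\<in>\<sigma>. Re (\<alpha> k) *\<^sub>R \<rho> k) $ t = 0 $ t" by (simp add: sum_component)
    qed
    have im: "(\<Sum>k\<in>\<sigma>. Im (\<alpha> k) *\<^sub>R \<rho> k) = 0"
    proof (rule vec_eq_iff[THEN iffD2, rule_format])
      fix t
      have "(\<Sum>k\<in>\<sigma>. Im (\<alpha> k) * \<rho> k $ t) = (\<Sum>k\<in>?R. Im (\<alpha> k) * \<rho> k $ t)"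
        by (rule RS[symmetric]) auto
      also have "\<dots> = Im (\<Sum>k\<in>?R. complex_of_real (\<rho> k $ t) * \<alpha> k)"
        by (simp add: Im_sum mult.commute)
      also have "\<dots> = 0" using L1 by simp
      finally show "(\<Sum>k\<in>\<sigma>. Im (\<alpha> k) *\<^sub>R \<rho> k) $ t = 0 $ t" by (simp add: sum_component)
    qed
    obtain k where "k \<in> F" using \<open>\<not> (\<forall>k\<in>?R. \<alpha> k = 0)\<close> by (auto simp: F_def)
    with True have "k \<in> \<sigma>" "\<alpha> k \<noteq> 0" by (auto simp: F_def)
    with fan_indep[OF fan sC re] fan_indep[OF fan sC im] show False
      by (simp add: complex_eq_iff)
  next
    case False
    then obtain k1 where k1F: "k1 \<in> F" and k1s: "k1 \<notin> \<sigma>" by blast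
    define l1 :: "nat \<times> nat \<Rightarrow> int" where
      "l1 k = (if k \<in> F then 1 else 0) - (if k \<in> \<sigma> then \<lfloor>c k\<rfloor> else 0)" for k
    define l :: "nat \<times> nat \<Rightarrow> int" where
      "l k = (if k \<in> ?R then l1 k else if k \<in> Jset r nI then - (\<Sum>j\<in>{1..nI (fst k)}. l1 (fst k, j)) else 0)" for k
    have fl: "\<forall>k\<in>\<sigma>. 0 \<le> \<lfloor>c k\<rfloor>" using c0 by simp
    have l1v: "\<And>k. k \<in> ?R \<Longrightarrow> real_of_int (l1 k) *\<^sub>R \<rho> k
        = (if k \<in> F then \<rho> k else 0) - (if k \<in> \<sigma> then c k *\<^sub>R \<rho> k else 0)"
      using cI by (auto simp: l1_def scaleR_diff_left)
    have V: "(\<Sum>k\<in>?R. real_of_int (l1 k) *\<^sub>R \<rho> k) = 0"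
    proof -
      have "(\<Sum>k\<in>?R. real_of_int (l1 k) *\<^sub>R \<rho> k)
         = (\<Sum>k\<in>?R. (if k \<in> F then \<rho> k else 0)) - (\<Sum>k\<in>?R. (if k \<in> \<sigma> then c k *\<^sub>R \<rho> k else 0))"
        by (simp add: l1v sum_subtractf)
      also have "\<dots> = (\<Sum>k\<in>F. \<rho> k) - (\<Sum>k\<in>\<sigma>. c k *\<^sub>R \<rho> k)"
        using FR sR by (simp add: sum.inter_restrict[OF finite_J1, symmetric] Int_absorb1 Int_absorb2 inf.absorb2)
      also have "\<dots> = 0" using xc x_def by simp
      finally show ?thesis .
    qed
    have Vm: "\<And>m. (\<Sum>k\<in>?R. real_of_int (l1 k) * (m \<bullet> \<rho> k)) = 0"
    proof -
      fix m :: "real^'n"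
      have "(\<Sum>k\<in>?R. real_of_int (l1 k) * (m \<bullet> \<rho> k)) = m \<bullet> (\<Sum>k\<in>?R. real_of_int (l1 k) *\<^sub>R \<rho> k)"
        by (simp add: inner_sum_right)
      then show "(\<Sum>k\<in>?R. real_of_int (l1 k) * (m \<bullet> \<rho> k)) = 0" using V by simp
    qed
    have pos: "\<And>g. (\<forall>k\<in>\<sigma>. g k = 0) \<Longrightarrow> (\<forall>k\<in>?R. g k \<ge> 0) \<Longrightarrow> (\<Sum>k\<in>?R. real_of_int (l1 k) * g k) \<ge> 0"
      by (rule sum_nonneg) (auto simp: l1_def)
    have Jneg: "\<And>i. i \<in> {1..r} \<Longrightarrow> (\<Sum>j\<in>{1..nI i}. l1 (i, j)) \<ge> 0"
    proof -
      fix i assume i: "i \<in> {1..r}"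
      have "nef_div \<rho> ?R C (\<lambda>k. if fst k = i then 1 else 0)"
        using nefp i unfolding nef_partition_def by blast
      then obtain m :: "real^'n" where m1: "\<forall>k\<in>\<sigma>. m \<bullet> \<rho> k = - (if fst k = i then 1 else 0)"
        and m2: "\<forall>k\<in>?R. m \<bullet> \<rho> k \<ge> - (if fst k = i then 1 else 0)"
        using sC unfolding nef_div_def by blast
      have "0 \<le> (\<Sum>k\<in>?R. real_of_int (l1 k) * ((if fst k = i then 1 else 0) + m \<bullet> \<rho> k))"
        by (rule pos) (use m1 m2 in auto)
      also have "\<dots> = (\<Sum>k\<in>?R. real_of_int (l1 k) * (if fst k = i then 1 else 0))"
        using Vm[of m] by (simp add: distrib_left sum.distrib)
      also have "\<dots> = (\<Sum>i'\<in>{1..r}. if i' = i then (\<Sum>j\<in>{1..nI i'}. real_of_int (l1 (i', j))) else 0)"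
        unfolding sum_J1 by (rule sum.cong) auto
      also have "\<dots> = real_of_int (\<Sum>j\<in>{1..nI i}. l1 (i, j))" using i by (simp add: of_int_sum)
      finally show "(\<Sum>j\<in>{1..nI i}. l1 (i, j)) \<ge> 0" by linarith
    qed
    have in0: "\<And>i. (i, 0) \<notin> ?R" by (simp add: J1_def)
    have inJ: "\<And>i j. i \<in> {1..r} \<Longrightarrow> j \<in> {1..nI i} \<Longrightarrow> (i,j) \<in> ?R" by (simp add: J1_def)
    have inJ0: "\<And>i. i \<in> {1..r} \<Longrightarrow> (i,0) \<in> Jset r nI" by (simp add: Jset_def)
    have lL: "l \<in> Lext r nI \<rho>"
      unfolding Lext_def
    proof (intro CollectI conjI allI impI ballI)
      fix k assume "k \<notin> Jset r nI" then show "l k = 0" using J1_sub by (auto simp: l_def)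
    next
      show "(\<Sum>k\<in>?R. real_of_int (l k) *\<^sub>R \<rho> k) = 0"
        using V by (simp add: l_def)
    next
      fix i assume i: "i \<in> {1..r}"
      have "(\<Sum>j\<in>{0..nI i}. l (i, j)) = l (i,0) + (\<Sum>j\<in>{Suc 0..nI i}. l (i, j))"
        by (simp add: sum.atLeast_Suc_atMost)
      also have "(\<Sum>j\<in>{Suc 0..nI i}. l (i, j)) = (\<Sum>j\<in>{1..nI i}. l1 (i, j))"
        using i by (intro sum.cong) (auto simp: l_def J1_def)
      finally show "(\<Sum>j\<in>{0..nI i}. l (i, j)) = 0"
        using i in0 inJ0 by (simp add: l_def)
    qed
    have lnz: "l \<noteq> (\<lambda>_. 0)"
    proof
      assume "l = (\<lambda>_. 0)"
      then have "l k1 = 0" by simp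
      moreover have "l k1 = 1" using k1F k1s FR by (auto simp: l_def l1_def)
      ultimately show False by simp
    qed
    have kah: "kahler_cone r nI \<rho> C \<subseteq> {w. 0 \<le> (\<Sum>k\<in>Jset r nI. w k * real_of_int (l k))}"
    proof
      fix w assume "w \<in> kahler_cone r nI \<rho> C"
      then have "ample_div \<rho> ?R C (\<lambda>k. w k - w (fst k, 0))" by (simp add: kahler_cone_def)
      then obtain m :: "real^'n" where m1: "\<forall>k\<in>\<sigma>. m \<bullet> \<rho> k = - (w k - w (fst k, 0))"
        and m2: "\<forall>k\<in>?R - \<sigma>. m \<bullet> \<rho> k > - (w k - w (fst k, 0))"
        using sC unfolding ample_div_def by blast
      have "0 \<le> (\<Sum>k\<in>?R. real_of_int (l1 k) * ((w k - w (fst k, 0)) + m \<bullet> \<rho> k))"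
      proof (rule pos)
        show "\<forall>k\<in>\<sigma>. w k - w (fst k, 0) + m \<bullet> \<rho> k = 0" using m1 by auto
        show "\<forall>k\<in>?R. 0 \<le> w k - w (fst k, 0) + m \<bullet> \<rho> k"
        proof
          fix k assume "k \<in> ?R"
          then show "0 \<le> w k - w (fst k, 0) + m \<bullet> \<rho> k" using m1 m2
          proof (cases "k \<in> \<sigma>")
            case False
            with \<open>k \<in> ?R\<close> m2 have "m \<bullet> \<rho> k > - (w k - w (fst k, 0))" by blast
            then show ?thesis by linarith
          qed (use m1 in auto)
        qed
      qed
      also have "\<dots> = (\<Sum>k\<in>?R. real_of_int (l1 k) * (w k - w (fst k, 0)))"
        using Vm[of m] by (simp add: distrib_left sum.distrib)
      also have "\<dots> = (\<Sum>k\<in>Jset r nI. w k * real_of_int (l k))"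
      proof -
        have "(\<Sum>k\<in>Jset r nI. w k * real_of_int (l k))
           = (\<Sum>i\<in>{1..r}. w (i,0) * real_of_int (l (i,0)) + (\<Sum>j\<in>{Suc 0..nI i}. w (i,j) * real_of_int (l (i,j))))"
          unfolding sum_Jset by (simp add: sum.atLeast_Suc_atMost)
        also have "\<dots> = (\<Sum>i\<in>{1..r}. \<Sum>j\<in>{1..nI i}. real_of_int (l1 (i,j)) * (w (i,j) - w (i, 0)))"
        proof (rule sum.cong[OF refl])
          fix i assume i: "i \<in> {1..r}"
          have a: "(\<Sum>j\<in>{Suc 0..nI i}. w (i,j) * real_of_int (l (i,j))) = (\<Sum>j\<in>{1..nI i}. w (i,j) * real_of_int (l1 (i,j)))"
            using i by (intro sum.cong) (auto simp: l_def J1_def)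
          have b: "l (i,0) = - (\<Sum>j\<in>{1..nI i}. l1 (i, j))" using i in0 inJ0 by (simp add: l_def)
          show "w (i,0) * real_of_int (l (i,0)) + (\<Sum>j\<in>{Suc 0..nI i}. w (i,j) * real_of_int (l (i,j)))
              = (\<Sum>j\<in>{1..nI i}. real_of_int (l1 (i,j)) * (w (i,j) - w (i, 0)))"
            unfolding a b by (simp add: sum_distrib_left algebra_simps sum_subtractf)
        qed
        also have "\<dots> = (\<Sum>k\<in>?R. real_of_int (l1 k) * (w k - w (fst k, 0)))"
          unfolding sum_J1 by simp
        finally show ?thesis by simp
      qed
      finally show "w \<in> {w. 0 \<le> (\<Sum>k\<in>Jset r nI. w k * real_of_int (l k))}" by simp
    qed
    have cl: "closed {w :: nat \<times> nat \<Rightarrow> real. 0 \<le> (\<Sum>k\<in>Jset r nI. w k * real_of_int (l k))}"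
      by (intro closed_Collect_le continuous_on_const continuous_on_sum continuous_on_mult continuous_on_product_coordinates)
    have "closure (kahler_cone r nI \<rho> C) \<subseteq> {w. 0 \<le> (\<Sum>k\<in>Jset r nI. w k * real_of_int (l k))}"
      by (rule closure_minimal[OF kah cl])
    with tau have "l \<in> dual_Lext r nI \<rho> \<tau>" using lL by (auto simp: dual_Lext_def)
    from Iz[OF this lnz] have I0: "I_ell r nI l \<alpha> = 0" .
    have "I_ell r nI l \<alpha> \<noteq> 0"
      unfolding I_ell_def
    proof (subst prod_zero_iff[OF finite_Jset], safe)
      fix k assume kJ: "k \<in> Jset r nI" and z: "(\<Prod>q<nat (l k). \<alpha> k - of_nat q) = 0"
      then obtain q where q: "q < nat (l k)" and aq: "\<alpha> k = of_nat q" by auto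
      have kR: "k \<in> ?R"
      proof (rule ccontr)
        assume "k \<notin> ?R"
        moreover have "fst k \<in> {1..r}" using kJ by (auto simp: Jset_def)
        ultimately have "l k \<le> 0" using kJ Jneg by (auto simp: l_def)
        with q show False by simp
      qed
      have kF: "k \<in> F"
      proof (rule ccontr)
        assume "k \<notin> F"
        then have "l k \<le> 0" using kR fl by (auto simp: l_def l1_def simp del: zero_le_floor)
        with q show False by simp
      qed
      have "l k \<le> 1" using kR fl by (auto simp: l_def l1_def simp del: zero_le_floor)
      with q have "q = 0" by simp
      with aq kF show False by (simp add: F_def)
    qed
    with I0 show False by simp
  qed
qed

theorem mainTheorem9:
  fixes r :: nat and nI :: "nat \<Rightarrow> nat" and \<rho> :: "nat \<times> nat \<Rightarrow> real^'n"
    and C :: "(nat \<times> nat) set set" and \<tau> :: "(nat \<times> nat \<Rightarrow> real) set"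
  assumes "smooth_complete_fan \<rho> (J1 r nI) C"
    and "projective_fan \<rho> (J1 r nI) C"
    and "nef_partition r nI \<rho> C"
    and "fun_convex_cone \<tau>"
    and "\<tau> \<subseteq> closure (kahler_cone r nI \<rho> C)"
  shows "\<forall>\<alpha>\<in>ind_zero_locus r nI \<rho> \<tau> 0 (\<lambda>i. - 1/2).
           \<forall>k\<in>Jset r nI. \<alpha> k = (if snd k = 0 then - 1/2 else 0)"
proof (intro ballI)
  fix \<alpha> k assume aZ: "\<alpha> \<in> ind_zero_locus r nI \<rho> \<tau> 0 (\<lambda>i. - 1/2)" and kJ: "k \<in> Jset r nI"
  have Z: "\<forall>k\<in>J1 r nI. \<alpha> k = 0" by (rule main_zero[OF assms(1,3,5) aZ])
  show "\<alpha> k = (if snd k = 0 then - 1/2 else 0)"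
  proof (cases "snd k = 0")
    case False
    then show ?thesis using Z kJ by (simp add: J1_iff)
  next
    case True
    obtain i where k: "k = (i, 0)" and i: "i \<in> {1..r}" using kJ True
      by (cases k) (auto simp: Jset_def)
    have "(\<Sum>j\<in>{0..nI i}. \<alpha> (i,j)) = - 1/2" using lin_facts(2)[OF aZ i] .
    moreover have "(\<Sum>j\<in>{0..nI i}. \<alpha> (i,j)) = \<alpha> (i,0) + (\<Sum>j\<in>{Suc 0..nI i}. \<alpha> (i,j))"
      by (simp add: sum.atLeast_Suc_atMost)
    moreover have "(\<Sum>j\<in>{Suc 0..nI i}. \<alpha> (i,j)) = 0"
      using Z i by (intro sum.neutral) (auto simp: J1_def)
    ultimately show ?thesis using k True by simp
  qed
qed

end
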